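(* Let $j\in\mathbb{N}$ and $b,r\in\mathbb{Z}$ with $b\neq0$. Then for every $x\in\mathbb{R}$, $$\sum_{d=-\infty}^{+\infty}\frac{e^{2\pi \mathrm{i} dx}}{\left(d+\frac{r}{b}-\frac{1}{2b}\right)^{j}}=\frac{(2\pi \mathrm{i})^{j}\,\mathrm{sgn}(b)}{2\,(j-1)!\,b^{1-j}}\sum_{l=0}^{|b|-1}e^{-\frac{2\pi \mathrm{i}(l+x)r}{b}+\frac{\pi \mathrm{i}(l+x)}{b}}\,\overline{E}_{j-1}\!\left(\frac{l+x}{b}\right).$$
   Context: $\mathrm{i}^2=-1$. Doubly infinite sums $\sum_{d=-\infty}^{+\infty}$ are interpreted as $\lim_{N\to\infty}\sum_{d=-N}^{N}$ (this matters for $j=1$). $[x]$ is the floor of $x$, $\{x\}=x-[x]$, $E_n(x)$ is the Euler polynomial ($\frac{2e^{xt}}{e^t+1}=\sum_{n\ge0}E_n(x)\frac{t^n}{n!}$). Quasi-periodic Euler functions: $\overline{E}_{0}(x)=(-1)^{[x]}$ if $x\notin\mathbb{Z}$ and $\overline{E}_0(x)=0$ if $x\in\mathbb{Z}$; $\overline{E}_{n}(x)=(-1)^{[x]}E_{n}(\{x\})$ for $n\ge1$. $\mathrm{sgn}(b)=b/|b|$. *)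

theory Defs
  imports "HOL-Analysis.Analysis" "HOL-Computational_Algebra.Formal_Power_Series"
begin

definition euler_poly :: "nat \<Rightarrow> real \<Rightarrow> real" where
  "euler_poly n x = fact n * fps_nth (2 * fps_exp x / (fps_exp 1 + 1)) n"

definition euler_bar :: "nat \<Rightarrow> real \<Rightarrow> real" where
  "euler_bar n x =
     (if n = 0 then (if x \<in> \<int> then 0 else (-1) powi \<lfloor>x\<rfloor>)
      else (-1) powi \<lfloor>x\<rfloor> * euler_poly n (frac x))"

end

theory Submission
  imports Defs
begin


definition eC :: "real fps" where "eC = inverse (fps_exp 1 + 1)"
definition eP :: "nat \<Rightarrow> real \<Rightarrow> real" where
  "eP n x = (\<Sum>i=0..n. 2 * x^i / fact i * fps_nth eC (n - i))"

lemma eC0: "fps_nth eC 0 = 1/2"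
  by (simp add: eC_def)

lemma eC_mult: "(fps_exp 1 + 1) * eC = 1"
  unfolding eC_def by (rule inverse_mult_eq_1') simp

lemma euler_poly_eP: "euler_poly n x = fact n * eP n x"
proof -
  have A: "2 * fps_exp x / (fps_exp 1 + 1) = (2 * fps_exp x) * eC"
    unfolding eC_def by (rule fps_divide_unit) simp
  have B: "(2::real fps) * fps_exp x = fps_const 2 * fps_exp x"
    by (simp add: numeral_fps_const)
  have C: "fps_nth ((fps_const 2 * fps_exp x) * eC) n = eP n x"
    unfolding fps_mult_nth[of "fps_const 2 * fps_exp x"] eP_def
    by (intro sum.cong refl) (simp add: fps_mult_left_const_nth)
  show ?thesis unfolding euler_poly_def by (subst A) (simp only: B C)
qed

lemma eP_0: "eP 0 x = 1" by (simp add: eP_def eC0)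

lemma eP_1_0: assumes "n \<ge> 1" shows "eP n 1 + eP n 0 = 0"
proof -
  have "fps_nth ((fps_exp 1 + 1) * eC) n = 0" using assms by (simp add: eC_mult)
  moreover have "fps_nth ((fps_exp 1 + 1) * eC) n = fps_nth (fps_exp 1 * eC) n + fps_nth eC n"
    by (simp add: distrib_right)
  moreover have "fps_nth (fps_exp 1 * eC) n = eP n 1 / 2"
    unfolding fps_mult_nth eP_def sum_divide_distrib by (intro sum.cong refl) simp
  moreover have "eP n 0 = 2 * fps_nth eC n"
    unfolding eP_def by (simp add: sum.atLeast_Suc_atMost zero_power)
  ultimately show ?thesis by simp
qed

lemma eP_deriv: "(eP (Suc n) has_real_derivative eP n x) (at x)"
proof -
  have eq: "eP (Suc n) = (\<lambda>x. 2 * fps_nth eC (Suc n) + (\<Sum>i=0..n. 2 * x^Suc i / fact (Suc i) * fps_nth eC (n - i)))"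
    by (rule ext) (simp only: eP_def sum.atLeast0_atMost_Suc_shift, simp)
  have "((\<lambda>x. 2 * fps_nth eC (Suc n) + (\<Sum>i=0..n. 2 * x^Suc i / fact (Suc i) * fps_nth eC (n - i)))
     has_real_derivative (0 + (\<Sum>i=0..n. 2 * (of_nat (Suc i) * x^i) / fact (Suc i) * fps_nth eC (n - i)))) (at x)"
  proof (intro derivative_intros)
    fix i
    show "((\<lambda>z. 2 * z ^ Suc i / fact (Suc i) * fps_nth eC (n - i)) has_real_derivative
       2 * (real (Suc i) * x ^ i) / fact (Suc i) * fps_nth eC (n - i)) (at x)"
    proof -
      have d: "((\<lambda>z. z^Suc i) has_real_derivative real (Suc i) * x^i) (at x)"
        using DERIV_pow[of "Suc i" x] by simp
      show ?thesis by (rule DERIV_cmult_right[OF DERIV_cdivide[OF DERIV_cmult[OF d]]])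
    qed
  qed
  moreover have "(\<Sum>i=0..n. 2 * (of_nat (Suc i) * x^i) / fact (Suc i) * fps_nth eC (n - i)) = eP n x"
    unfolding eP_def by (intro sum.cong refl) (simp add: fact_Suc del: of_nat_Suc)
  ultimately show ?thesis by (simp add: eq)
qed



definition v :: "nat \<Rightarrow> nat \<Rightarrow> real \<Rightarrow> real" where
  "v n k y = 2 * cos ((2 * real k + 1) * pi * y - real (Suc n) * pi / 2) / ((2 * real k + 1) * pi) ^ Suc n"

lemma v0: "v 0 k y = 2 * sin ((2 * real k + 1) * pi * y) / ((2 * real k + 1) * pi)"
  by (simp add: v_def cos_diff)

lemma v_deriv: "(v (Suc n) k has_real_derivative v n k y) (at y)"
proof -
  define w where "w = (2 * real k + 1) * pi"
  have w: "w > 0" unfolding w_def by (simp add: add_pos_nonneg)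
  have eq: "v m k = (\<lambda>y. 2 * cos (w * y - real (Suc m) * pi / 2) / w ^ Suc m)" for m
    by (rule ext) (simp add: v_def w_def)
  have "- sin (w * y - real (Suc (Suc n)) * pi / 2) = cos (w * y - real (Suc n) * pi / 2)"
  proof -
    have e: "w * y - real (Suc (Suc n)) * pi / 2 = (w * y - real (Suc n) * pi / 2) - pi / 2"
      by (simp add: field_simps)
    have s: "sin (A - pi/2) = - cos A" for A by (simp add: sin_diff)
    show ?thesis by (simp only: e s minus_minus)
  qed
  hence "((\<lambda>y. 2 * cos (w * y - real (Suc (Suc n)) * pi / 2) / w ^ Suc (Suc n)) has_real_derivative
      2 * cos (w * y - real (Suc n) * pi / 2) / w ^ Suc n) (at y)"
    using w by (auto intro!: derivative_eq_intros simp: field_simps)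
  thus ?thesis by (simp add: eq)
qed

lemma minus_one_powi: "(-1::real) powi m = (if even m then 1 else -1)"
  by (auto simp: power_int_def even_nat_iff)

lemma cos_add_pi_int: "cos (x + pi * real_of_int m) = (-1) powi m * cos x"
  by (simp add: cos_add minus_one_powi)

lemma v_shift: "v n k (y + real_of_int z) = (-1) powi z * v n k y"
proof -
  have "(2 * real k + 1) * pi * (y + real_of_int z) - real (Suc n) * pi / 2
      = ((2 * real k + 1) * pi * y - real (Suc n) * pi / 2) + pi * of_int ((2 * int k + 1) * z)"
    by (simp add: field_simps)
  moreover have "even ((2 * int k + 1) * z) \<longleftrightarrow> even z" by simp
  ultimately show ?thesis unfolding v_def
    by (simp only: cos_add_pi_int) (simp add: minus_one_powi)
qed

lemma dirichlet: "sin t * (\<Sum>k<K. 2 * cos ((2 * real k + 1) * t)) = sin (2 * real K * t)"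
proof (induction K)
  case 0 then show ?case by simp
next
  case (Suc K)
  have "sin (2 * real (Suc K) * t) = sin ((2 * real K + 1) * t + t)" by (simp add: field_simps)
  also have "\<dots> = sin (2 * real K * t) + 2 * cos ((2 * real K + 1) * t) * sin t"
  proof -
    have e: "2 * real K * t = (2 * real K + 1) * t - t" by (simp add: field_simps)
    show ?thesis by (subst e) (simp add: sin_add sin_diff)
  qed
  finally show ?case using Suc by (simp add: algebra_simps)
qed

lemma S_deriv:
  assumes "sin (pi * t) \<noteq> 0"
  shows "((\<lambda>y. \<Sum>k<K. v 0 k y) has_real_derivative sin (2 * real K * pi * t) / sin (pi * t)) (at t)"
proof -
  have d: "(v 0 k has_real_derivative 2 * cos ((2 * real k + 1) * (pi * t))) (at t)" for k
  proof -
    define w where "w = (2 * real k + 1) * pi"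
    have pos: "w > 0" unfolding w_def by (simp add: add_pos_nonneg)
    have "((\<lambda>y. sin (w * y)) has_real_derivative cos (w * t) * w) (at t)"
      by (auto intro!: derivative_eq_intros)
    from DERIV_cdivide[OF DERIV_cmult[OF this, of 2], of w]
    have "((\<lambda>y. 2 * sin (w * y) / w) has_real_derivative 2 * cos (w * t)) (at t)"
      using pos by simp
    moreover have "v 0 k = (\<lambda>y. 2 * sin (w * y) / w)"
      by (rule ext) (simp add: v0 w_def)
    moreover have "w * t = (2 * real k + 1) * (pi * t)" unfolding w_def by simp
    ultimately show ?thesis by simp
  qed
  have "((\<lambda>y. \<Sum>k<K. v 0 k y) has_real_derivative (\<Sum>k<K. 2 * cos ((2 * real k + 1) * (pi * t)))) (at t)"
    by (intro DERIV_sum d)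
  moreover have "(\<Sum>k<K. 2 * cos ((2 * real k + 1) * (pi * t))) = sin (2 * real K * pi * t) / sin (pi * t)"
    using dirichlet[of "pi * t" K] assms by (simp add: field_simps)
  ultimately show ?thesis by simp
qed

lemma leibniz_half: "(\<lambda>K. \<Sum>k<K. v 0 k (1/2)) \<longlonglongrightarrow> 1/2"
proof -
  have s1: "(\<lambda>k. (-1)^k * (1 / real (k*2+1) * 1 ^ (k*2+1))) sums arctan 1"
    using summable_arctan_series[of 1] arctan_series[of 1] by (simp add: sums_iff)
  hence "(\<lambda>k. (-1)^k / real (k*2+1)) sums (pi/4)" by (simp add: arctan_one)
  hence "(\<lambda>k. 2 / pi * ((-1)^k / real (k*2+1))) sums (2 / pi * (pi/4))"
    by (rule sums_mult)
  moreover have "v 0 k (1/2) = 2 / pi * ((-1)^k / real (k*2+1))" for k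
  proof -
    have e0: "(2 * real k + 1) * pi * (1/2) = real k * pi + pi / 2" by (simp add: field_simps)
    have "sin ((2 * real k + 1) * pi * (1/2)) = sin (real k * pi + pi / 2)" by (simp only: e0)
    also have "\<dots> = (-1)^k" by (simp add: sin_add)
    finally have e1: "sin ((2 * real k + 1) * pi * (1/2)) = (-1)^k" .
    have "v 0 k (1/2) = 2 * (-1)^k / ((2 * real k + 1) * pi)" by (simp only: v0 e1)
    thus ?thesis by (simp add: field_simps)
  qed
  ultimately have "(\<lambda>k. v 0 k (1/2)) sums (1/2)" by simp
  thus ?thesis by (simp add: sums_def)
qed

lemma sin_lower:
  assumes "0 < c" "c \<le> t" "t \<le> 1 - c"
  shows "sin (pi * c) \<le> sin (pi * t)"
proof -
  have "0 \<le> pi * c" using assms by simp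
  hence h: "-(pi/2) \<le> pi * c" using pi_gt_zero by linarith
  show ?thesis
  proof (cases "t \<le> 1/2")
    case True
    have "pi * c \<le> pi * t" using assms by simp
    moreover have "pi * t \<le> pi / 2" using True by simp
    ultimately show ?thesis using sin_monotone_2pi_le[OF h] by blast
  next
    case False
    have "pi * c \<le> pi * (1 - t)" using assms by simp
    moreover have "pi * (1 - t) \<le> pi / 2" using False by (simp add: field_simps)
    ultimately have "sin (pi * c) \<le> sin (pi * (1 - t))" using sin_monotone_2pi_le[OF h] by blast
    also have "sin (pi * (1 - t)) = sin (pi * t)" by (simp add: right_diff_distrib sin_diff)
    finally show ?thesis .
  qed
qed

lemma S_bound:
  assumes c: "0 < c" "c \<le> 1/2" and K: "K \<ge> 1" and y: "y \<in> {c..1-c}"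
  shows "\<bar>(\<Sum>k<K. v 0 k y) - (\<Sum>k<K. v 0 k (1/2))\<bar>
           \<le> (1 / (4 * sin (pi * c)^2) + 1 / (pi * sin (pi * c))) / real K"
proof -
  define s where "s = sin (pi * c)"
  have s: "s > 0" unfolding s_def using c by (intro sin_gt_zero) auto
  have sl: "s \<le> sin (pi * t)" if "t \<in> {c..1-c}" for t
    unfolding s_def using that c by (intro sin_lower) auto
  have Kp: "real K > 0" using K by simp
  define F where "F t = - cos (2 * real K * pi * t) / (2 * real K * pi * sin (pi * t))" for t
  define G where "G t = (\<Sum>k<K. v 0 k t) - F t" for t
  define G' where "G' t = - cos (2 * real K * pi * t) * cos (pi * t) / (2 * real K * sin (pi * t)^2)" for t
  have dG: "(G has_real_derivative G' t) (at t within {c..1-c})" if t: "t \<in> {c..1-c}" for t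
  proof -
    have st: "sin (pi * t) > 0" using sl[OF t] s by linarith
    have d1: "((\<lambda>t. - cos (2 * real K * pi * t)) has_real_derivative sin (2 * real K * pi * t) * (2 * real K * pi)) (at t)"
      by (auto intro!: derivative_eq_intros)
    have d2: "((\<lambda>t. 2 * real K * pi * sin (pi * t)) has_real_derivative 2 * real K * pi * (cos (pi * t) * pi)) (at t)"
      by (auto intro!: derivative_eq_intros)
    have ne: "2 * real K * pi * sin (pi * t) \<noteq> 0" using st Kp by simp
    from DERIV_divide[OF d1 d2 ne]
    have "(F has_real_derivative
         (sin (2 * real K * pi * t) * (2 * real K * pi) * (2 * real K * pi * sin (pi * t)) -
          - cos (2 * real K * pi * t) * (2 * real K * pi * (cos (pi * t) * pi))) /
         (2 * real K * pi * sin (pi * t) * (2 * real K * pi * sin (pi * t)))) (at t)"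
      unfolding F_def[abs_def] by simp
    moreover have "(sin (2 * real K * pi * t) * (2 * real K * pi) * (2 * real K * pi * sin (pi * t)) -
          - cos (2 * real K * pi * t) * (2 * real K * pi * (cos (pi * t) * pi))) /
         (2 * real K * pi * sin (pi * t) * (2 * real K * pi * sin (pi * t))) =
          sin (2 * real K * pi * t) / sin (pi * t) + cos (2 * real K * pi * t) * cos (pi * t) / (2 * real K * sin (pi * t)^2)"
      using st Kp by (simp add: field_simps power2_eq_square)
    ultimately have "(F has_real_derivative
          sin (2 * real K * pi * t) / sin (pi * t) + cos (2 * real K * pi * t) * cos (pi * t) / (2 * real K * sin (pi * t)^2)) (at t)"
      by simp
    from DERIV_diff[OF S_deriv[of t K] this] st
    have "(G has_real_derivative G' t) (at t)"
      unfolding G_def[abs_def] G'_def by (simp add: field_simps)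
    thus ?thesis by (rule has_field_derivative_at_within)
  qed
  have nG: "norm (G' t) \<le> 1 / (2 * real K * s^2)" if t: "t \<in> {c..1-c}" for t
  proof -
    have st: "sin (pi * t) \<ge> s" using sl[OF t] .
    have "norm (G' t) = \<bar>cos (2 * real K * pi * t)\<bar> * \<bar>cos (pi * t)\<bar> / (2 * real K * sin (pi * t)^2)"
      unfolding G'_def by (simp add: abs_mult)
    also have "\<dots> \<le> 1 * 1 / (2 * real K * sin (pi * t)^2)"
      using Kp by (intro divide_right_mono mult_mono) auto
    also have "\<dots> \<le> 1 / (2 * real K * s^2)"
      by (intro frac_le mult_left_mono power_mono mult_pos_pos) (use s st Kp in auto)
    finally show ?thesis .
  qed
  have half: "1/2 \<in> {c..1-c}" using c by auto
  have "norm (G y - G (1/2)) \<le> 1 / (2 * real K * s^2) * norm (y - 1/2)"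
    by (rule field_differentiable_bound[OF convex_real_interval(5) dG nG y half])
  also have "\<dots> \<le> 1 / (2 * real K * s^2) * (1/2)"
    by (intro mult_left_mono) (use y c s Kp in \<open>auto simp: abs_if\<close>)
  finally have g: "\<bar>G y - G (1/2)\<bar> \<le> 1 / (4 * real K * s^2)" by simp
  have fb: "\<bar>F t\<bar> \<le> 1 / (2 * real K * pi * s)" if t: "t \<in> {c..1-c}" for t
  proof -
    have st: "sin (pi * t) \<ge> s" using sl[OF t] .
    have "\<bar>F t\<bar> = \<bar>cos (2 * real K * pi * t)\<bar> / (2 * real K * pi * sin (pi * t))"
      unfolding F_def using st s Kp by (simp add: abs_mult)
    also have "\<dots> \<le> 1 / (2 * real K * pi * sin (pi * t))"
      using st s Kp by (intro divide_right_mono) auto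
    also have "\<dots> \<le> 1 / (2 * real K * pi * s)"
      using st s Kp by (intro divide_left_mono mult_left_mono) auto
    finally show ?thesis .
  qed
  have "\<bar>(\<Sum>k<K. v 0 k y) - (\<Sum>k<K. v 0 k (1/2))\<bar> = \<bar>(G y - G (1/2)) + F y - F (1/2)\<bar>"
    unfolding G_def by simp
  also have "\<dots> \<le> \<bar>G y - G (1/2)\<bar> + \<bar>F y\<bar> + \<bar>F (1/2)\<bar>" by linarith
  also have "\<dots> \<le> 1 / (4 * real K * s^2) + 1 / (2 * real K * pi * s) + 1 / (2 * real K * pi * s)"
    using g fb[OF y] fb[OF half] by linarith
  also have "\<dots> = (1 / (4 * s^2) + 1 / (pi * s)) / real K"
    using s Kp by (simp add: field_simps)
  finally show ?thesis unfolding s_def .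
qed

lemma uniform_sq:
  assumes c: "0 < c" "c \<le> 1/2"
  shows "uniform_limit {c..1-c} (\<lambda>K y. \<Sum>k<K. v 0 k y) (\<lambda>y. 1/2) sequentially"
  unfolding uniform_limit_iff
proof (intro allI impI)
  fix e :: real assume e: "e > 0"
  define B where "B = 1 / (4 * sin (pi * c)^2) + 1 / (pi * sin (pi * c))"
  have ev1: "\<forall>\<^sub>F K in sequentially. dist (\<Sum>k<K. v 0 k (1/2)) (1/2) < e/2"
    using tendsto_iff[THEN iffD1, OF leibniz_half, rule_format, of "e/2"] e by simp
  have lim0: "(\<lambda>K. B / real K) \<longlonglongrightarrow> 0"
    by (intro tendsto_divide_0[OF tendsto_const] filterlim_at_top_imp_at_infinity[OF filterlim_real_sequentially])
  have ev2: "\<forall>\<^sub>F K in sequentially. dist (B / real K) 0 < e/2"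
    using tendsto_iff[THEN iffD1, OF lim0, rule_format, of "e/2"] e by (metis half_gt_zero)
  have ev3: "\<forall>\<^sub>F K in sequentially. K \<ge> (1::nat)" by (rule eventually_ge_at_top)
  show "\<forall>\<^sub>F K in sequentially. \<forall>y\<in>{c..1-c}. dist (\<Sum>k<K. v 0 k y) (1/2) < e"
    using ev1 ev2 ev3
  proof eventually_elim
    case (elim K)
    show ?case
    proof
      fix y assume y: "y \<in> {c..1-c}"
      have t1: "\<bar>(\<Sum>k<K. v 0 k y) - (\<Sum>k<K. v 0 k (1/2))\<bar> \<le> B / real K"
        unfolding B_def by (rule S_bound[OF c elim(3) y])
      have t2: "\<bar>(\<Sum>k<K. v 0 k (1/2)) - 1/2\<bar> < e/2" using elim(1) by (simp only: dist_real_def)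
      have "\<bar>B / real K - 0\<bar> < e/2" using elim(2) by (simp only: dist_real_def)
      hence t3: "B / real K < e/2" by arith
      show "dist (\<Sum>k<K. v 0 k y) (1/2) < e"
        unfolding dist_real_def using t1 t2 t3 by arith
    qed
  qed
qed



lemma v_cont: "continuous_on S (v n k)"
  unfolding v_def by (intro continuous_intros) (simp add: add_pos_nonneg)

lemma v_bound: "\<bar>v (Suc n) k y\<bar> \<le> 2 / (real k + 1)^2"
proof -
  have b1: "(2 * real k + 1) * pi \<ge> 1"
    using mult_mono[of 1 "2 * real k + 1" 1 pi] pi_ge_two by simp
  have "(real k + 1)^2 \<le> ((2 * real k + 1) * pi)^2"
    using mult_mono[of "real k + 1" "2 * real k + 1" 1 pi] pi_ge_two by (intro power_mono) auto
  also have "((2 * real k + 1) * pi)^2 \<le> ((2 * real k + 1) * pi) ^ Suc (Suc n)"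
    by (intro power_increasing b1) auto
  finally have le: "(real k + 1)^2 \<le> ((2 * real k + 1) * pi) ^ Suc (Suc n)" .
  have "\<bar>v (Suc n) k y\<bar> = 2 * \<bar>cos ((2 * real k + 1) * pi * y - real (Suc (Suc n)) * pi / 2)\<bar> / ((2 * real k + 1) * pi) ^ Suc (Suc n)"
    unfolding v_def using b1 by (simp add: abs_mult)
  also have "\<dots> \<le> 2 * 1 / ((2 * real k + 1) * pi) ^ Suc (Suc n)"
    using b1 by (intro divide_right_mono mult_left_mono) auto
  also have "\<dots> \<le> 2 / (real k + 1)^2"
    by (intro frac_le) (use le in auto)
  finally show ?thesis .
qed

lemma summable_sq: "summable (\<lambda>k. 2 / (real k + 1)^2)"
proof -
  have "summable (\<lambda>k. 1 / (real k + 1)^2)"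
    using inverse_squares_sums by (simp add: sums_iff add.commute)
  from summable_mult[OF this, of 2] show ?thesis by simp
qed

lemma core:
  shows "(\<forall>c. 0 < c \<and> c \<le> 1/2 \<longrightarrow>
            uniform_limit {c..1-c} (\<lambda>K y. \<Sum>k<K. v n k y) (\<lambda>y. eP n y / 2) sequentially)
       \<and> (n \<ge> 1 \<longrightarrow> (\<forall>y\<in>{0..1}. (\<lambda>K. \<Sum>k<K. v n k y) \<longlonglongrightarrow> eP n y / 2))"
proof (induction n)
  case 0
  show ?case using uniform_sq by (simp add: eP_0)
next
  case (Suc n)
  have IH: "uniform_limit {c..1-c} (\<lambda>K y. \<Sum>k<K. v n k y) (\<lambda>y. eP n y / 2) sequentially"
    if "0 < c" "c \<le> 1/2" for c using Suc.IH that by blast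
  define G where "G y = (\<Sum>k. v (Suc n) k y)" for y
  have summ: "summable (\<lambda>k. v (Suc n) k y)" for y
    by (rule summable_comparison_test[OF _ summable_sq]) (use v_bound in auto)
  have unif: "uniform_limit UNIV (\<lambda>K y. \<Sum>k<K. v (Suc n) k y) G sequentially"
    unfolding G_def[abs_def] by (rule Weierstrass_m_test[OF _ summable_sq]) (use v_bound in auto)
  have contG: "continuous_on UNIV G"
    by (rule uniform_limit_theorem[OF _ unif]) (auto intro!: always_eventually continuous_intros v_cont)
  define H where "H y = G y - eP (Suc n) y / 2" for y
  have dH: "DERIV H y :> 0" if y: "0 < y" "y < 1" for y
  proof -
    define c where "c = min y (1 - y) / 2"
    have c: "0 < c" "c \<le> 1/2" using y by (auto simp: c_def)
    have "c \<le> y / 2" "c \<le> (1 - y) / 2" unfolding c_def by auto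
    hence yi: "y \<in> interior {c..1-c}" using y by (simp add: interior_atLeastAtMost_real)
    have uc: "uniformly_convergent_on {c..1-c} (\<lambda>K y. \<Sum>k<K. v n k y)"
      using IH[OF c] unfolding uniformly_convergent_on_def by blast
    have der: "\<And>k x. x \<in> {c..1-c} \<Longrightarrow> (v (Suc n) k has_field_derivative v n k x) (at x within {c..1-c})"
      by (rule has_field_derivative_at_within[OF v_deriv])
    have y0: "y \<in> {c..1-c}" using yi interior_subset by blast
    have d1: "(G has_real_derivative (\<Sum>k. v n k y)) (at y)"
      using has_field_derivative_series'(2)[OF convex_real_interval(5) der uc y0 summ yi]
      unfolding G_def[abs_def] .
    have "y \<in> {c..1-c}" using yi interior_subset by blast
    hence "(\<lambda>K. \<Sum>k<K. v n k y) \<longlonglongrightarrow> eP n y / 2"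
      using tendsto_uniform_limitI[OF IH[OF c]] by blast
    hence "(\<Sum>k. v n k y) = eP n y / 2" by (metis sums_def sums_unique)
    with d1 have "(G has_real_derivative eP n y / 2) (at y)" by simp
    from DERIV_diff[OF this DERIV_cdivide[OF eP_deriv[of n y], of 2]]
    show ?thesis unfolding H_def[abs_def] by simp
  qed
  have ceP: "continuous_on S (eP (Suc n))" for S
    by (rule DERIV_continuous_on, rule has_field_derivative_at_within, rule eP_deriv)
  have contH: "continuous_on {0..1} H"
    unfolding H_def[abs_def]
    by (intro continuous_intros continuous_on_subset[OF contG] ceP) auto
  have "H 1 = H 0" by (rule DERIV_isconst_end[OF _ contH dH]) auto
  moreover have "G 1 = - G 0"
  proof -
    have "v (Suc n) k 1 = - v (Suc n) k 0" for k
      using v_shift[of "Suc n" k 0 1] by simp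
    thus ?thesis unfolding G_def by (simp add: suminf_minus[OF summ])
  qed
  moreover have "eP (Suc n) 1 + eP (Suc n) 0 = 0" by (rule eP_1_0) simp
  ultimately have H0: "H 0 = 0" unfolding H_def by simp
  have Geq: "G y = eP (Suc n) y / 2" if "y \<in> {0..1}" for y
  proof -
    have "H y = H 0" by (rule DERIV_isconst2[OF _ contH dH]) (use that in auto)
    with H0 show ?thesis unfolding H_def by simp
  qed
  have pt: "\<forall>y\<in>{0..1}. (\<lambda>K. \<Sum>k<K. v (Suc n) k y) \<longlonglongrightarrow> eP (Suc n) y / 2"
  proof
    fix y :: real assume y: "y \<in> {0..1}"
    have "(\<lambda>K. \<Sum>k<K. v (Suc n) k y) \<longlonglongrightarrow> G y"
      unfolding G_def by (rule summable_LIMSEQ[OF summ[of y]])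
    thus "(\<lambda>K. \<Sum>k<K. v (Suc n) k y) \<longlonglongrightarrow> eP (Suc n) y / 2" using Geq[OF y] by simp
  qed
  have un: "uniform_limit {c..1-c} (\<lambda>K y. \<Sum>k<K. v (Suc n) k y) (\<lambda>y. eP (Suc n) y / 2) sequentially"
    if "0 < c" "c \<le> 1/2" for c :: real
  proof -
    have "uniform_limit {c..1-c} (\<lambda>K y. \<Sum>k<K. v (Suc n) k y) G sequentially"
      by (rule uniform_limit_on_subset[OF unif]) auto
    moreover have "uniform_limit {c..1-c} (\<lambda>K y. \<Sum>k<K. v (Suc n) k y) G sequentially
       \<longleftrightarrow> uniform_limit {c..1-c} (\<lambda>K y. \<Sum>k<K. v (Suc n) k y) (\<lambda>y. eP (Suc n) y / 2) sequentially"
      by (rule uniform_limit_cong'[OF refl]) (use that Geq in auto)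
    ultimately show ?thesis by blast
  qed
  show ?case using pt un by blast
qed

lemma ebar_series: "(\<lambda>K. \<Sum>k<K. v n k y) \<longlonglongrightarrow> euler_bar n y / (2 * fact n)"
proof -
  define z where "z = \<lfloor>y\<rfloor>"
  define f where "f = frac y"
  have y: "y = f + real_of_int z" unfolding f_def z_def by (simp add: frac_def)
  have f: "0 \<le> f" "f < 1" unfolding f_def by (auto simp: frac_lt_1)
  have sh: "(\<Sum>k<K. v n k y) = (-1) powi z * (\<Sum>k<K. v n k f)" for K
    unfolding y by (simp add: v_shift sum_distrib_left)
  have lim_f: "(\<lambda>K. \<Sum>k<K. v n k f) \<longlonglongrightarrow> eP n f / 2" if "n \<ge> 1 \<or> f > 0"
  proof (cases "n \<ge> 1")
    case True
    thus ?thesis using core[of n] f by auto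
  next
    case False
    hence fp: "f > 0" using that by auto
    define c where "c = min f (1 - f)"
    have c: "0 < c" "c \<le> 1/2" using f fp unfolding c_def min_def by auto
    have "f \<in> {c..1-c}" unfolding c_def using f by auto
    from tendsto_uniform_limitI[OF conjunct1[OF core[of n], rule_format, OF conjI[OF c]] this]
    show ?thesis .
  qed
  show ?thesis
  proof (cases "n = 0")
    case True
    show ?thesis
    proof (cases "y \<in> \<int>")
      case True
      hence "f = 0" unfolding f_def by (simp add: frac_eq_0_iff)
      hence "v 0 k f = 0" for k by (simp add: v0)
      hence "(\<Sum>k<K. v 0 k y) = 0" for K using sh[of K] \<open>n = 0\<close> by simp
      thus ?thesis using \<open>n = 0\<close> True by (simp add: euler_bar_def)
    next
      case False
      hence "f \<noteq> 0" unfolding f_def by (simp add: frac_eq_0_iff)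
      hence "f > 0" using f by auto
      from tendsto_mult[OF tendsto_const lim_f] this \<open>n = 0\<close>
      have "(\<lambda>K. (-1) powi z * (\<Sum>k<K. v 0 k f)) \<longlonglongrightarrow> (-1) powi z * (eP 0 f / 2)" by auto
      moreover have "(\<lambda>K. \<Sum>k<K. v 0 k y) = (\<lambda>K. (-1) powi z * (\<Sum>k<K. v 0 k f))"
        using sh \<open>n = 0\<close> by simp
      ultimately show ?thesis using \<open>n = 0\<close> False by (simp add: euler_bar_def eP_0 z_def)
    qed
  next
    case False
    hence "n \<ge> 1" by simp
    from tendsto_mult[OF tendsto_const lim_f] this
    have lim1: "(\<lambda>K. (-1) powi z * (\<Sum>k<K. v n k f)) \<longlonglongrightarrow> (-1) powi z * (eP n f / 2)" by auto
    have eqb: "euler_bar n y / (2 * fact n) = (-1) powi z * (eP n f / 2)"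
      using False by (simp add: euler_bar_def euler_poly_eP z_def f_def)
    show ?thesis unfolding sh eqb by (rule lim1)
  qed
qed



definition u :: "nat \<Rightarrow> int \<Rightarrow> real \<Rightarrow> complex" where
  "u n m y = exp (of_real pi * \<i> * of_int m * of_real y) / (of_real pi * \<i> * of_int m) ^ Suc n"

lemma u_pair: "complex_of_real (v n k y) = u n (2 * int k + 1) y + u n (- (2 * int k + 1)) y"
proof -
  define w where "w = (2 * real k + 1) * pi"
  define \<theta> where "\<theta> = w * y"
  define \<phi> where "\<phi> = real (Suc n) * pi / 2"
  have w: "w > 0" unfolding w_def by (simp add: add_pos_nonneg)
  have n1: "exp (of_real pi * \<i> * of_int (2 * int k + 1) * of_real y) = cis \<theta>"
    unfolding cis_conv_exp \<theta>_def w_def by (simp add: mult_ac)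
  have n2: "exp (of_real pi * \<i> * of_int (- (2 * int k + 1)) * of_real y) = cis (- \<theta>)"
    unfolding cis_conv_exp \<theta>_def w_def by (rule arg_cong[where f=exp]) (simp add: algebra_simps)
  have i1: "\<i> ^ Suc n = cis \<phi>"
  proof -
    have "\<i> ^ Suc n = cis (pi/2) ^ Suc n" by (simp only: cis_pi_half)
    also have "\<dots> = cis (real (Suc n) * (pi/2))" by (simp only: Complex.DeMoivre)
    also have "\<dots> = cis \<phi>" unfolding \<phi>_def by (simp only: times_divide_eq_right)
    finally show ?thesis .
  qed
  have i2: "(- \<i>) ^ Suc n = cis (- \<phi>)"
  proof -
    have m: "- \<i> = cis (- (pi/2))" by (simp add: cis.ctr complex_eq_iff)
    have "(- \<i>) ^ Suc n = cis (- (pi/2)) ^ Suc n" by (simp only: m)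
    also have "\<dots> = cis (real (Suc n) * (- (pi/2)))" by (simp only: Complex.DeMoivre)
    also have "\<dots> = cis (- \<phi>)" unfolding \<phi>_def by (simp only: times_divide_eq_right mult_minus_right)
    finally show ?thesis .
  qed
  have d1: "(of_real pi * \<i> * of_int (2 * int k + 1)) ^ Suc n = cis \<phi> * of_real (w ^ Suc n)"
  proof -
    have "of_real pi * \<i> * of_int (2 * int k + 1) = \<i> * of_real w" unfolding w_def by (simp add: mult_ac)
    thus ?thesis by (simp only: power_mult_distrib i1 of_real_power)
  qed
  have d2: "(of_real pi * \<i> * of_int (- (2 * int k + 1))) ^ Suc n = cis (- \<phi>) * of_real (w ^ Suc n)"
  proof -
    have "of_real pi * \<i> * of_int (- (2 * int k + 1)) = (- \<i>) * of_real w" unfolding w_def by (simp add: mult_ac) (simp add: algebra_simps)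
    thus ?thesis by (simp only: power_mult_distrib i2 of_real_power)
  qed
  have "u n (2 * int k + 1) y + u n (- (2 * int k + 1)) y
      = (cis \<theta> / cis \<phi> + cis (- \<theta>) / cis (- \<phi>)) / of_real (w ^ Suc n)"
    unfolding u_def n1 n2 d1 d2 using w by (simp add: field_simps)
  also have "cis \<theta> / cis \<phi> + cis (- \<theta>) / cis (- \<phi>) = of_real (2 * cos (\<theta> - \<phi>))"
    using cos_minus[of "\<theta> - \<phi>"] sin_minus[of "\<theta> - \<phi>"] by (simp add: cis_divide complex_eq_iff)
  also have "of_real (2 * cos (\<theta> - \<phi>)) / of_real (w ^ Suc n) = complex_of_real (v n k y)"
    unfolding v_def \<theta>_def \<phi>_def w_def by simp
  finally show ?thesis ..
qed

lemma int_interval_image: "(B::int) \<ge> 0 \<Longrightarrow> {0..B - 1} = int ` {..<nat B}"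
  by (auto simp: image_iff intro!: bexI[where x="nat _"])

lemma exp_int_eq_1: "exp (2 * of_real pi * \<i> * of_int s) = (1::complex)"
  by (simp add: exp_eq_1)

lemma root_sum:
  fixes t b :: int
  assumes b: "b \<noteq> 0"
  shows "(\<Sum>l = 0..\<bar>b\<bar> - 1. exp (2 * of_real pi * \<i> * of_int t * of_int l / of_int b))
       = (if b dvd t then of_int \<bar>b\<bar> else (0::complex))"
proof -
  define \<omega> where "\<omega> = exp (2 * of_real pi * \<i> * of_int t / of_int b :: complex)"
  have pw: "exp (2 * of_real pi * \<i> * of_int t * of_int (int i) / of_int b) = \<omega> ^ i" for i :: nat
  proof -
    have "exp (2 * of_real pi * \<i> * of_int t * of_int (int i) / of_int b) = exp (of_nat i * (2 * of_real pi * \<i> * of_int t / of_int b))"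
      by (simp add: mult_ac)
    thus ?thesis unfolding \<omega>_def by (simp only: exp_of_nat_mult)
  qed
  have "(\<Sum>l = 0..\<bar>b\<bar> - 1. exp (2 * of_real pi * \<i> * of_int t * of_int l / of_int b))
      = (\<Sum>i<nat \<bar>b\<bar>. exp (2 * of_real pi * \<i> * of_int t * of_int (int i) / of_int b))"
    by (subst int_interval_image) (simp_all add: sum.reindex)
  also have "\<dots> = (\<Sum>i<nat \<bar>b\<bar>. \<omega> ^ i)" by (simp only: pw)
  also have "\<dots> = (if b dvd t then of_int \<bar>b\<bar> else 0)"
  proof (cases "b dvd t")
    case True
    then obtain s where s: "t = b * s" by blast
    have "\<omega> = exp (2 * of_real pi * \<i> * of_int s)"
      unfolding \<omega>_def s using b by (simp add: field_simps)
    hence "\<omega> = 1" by (simp only: exp_int_eq_1)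
    thus ?thesis using True by (simp add: sum_gp_strict)
  next
    case False
    have ne: "\<omega> \<noteq> 1"
    proof
      assume "\<omega> = 1"
      then obtain s :: int where s: "Im (2 * of_real pi * \<i> * of_int t / of_int b) = of_int (2 * s) * pi"
        unfolding \<omega>_def exp_eq_1 by blast
      hence "2 * pi * t / b = 2 * s * pi" by simp
      hence "real_of_int t = real_of_int (b * s)" using b by (simp add: field_simps)
      hence "t = b * s" by (simp only: of_int_eq_iff)
      thus False using False by simp
    qed
    have "\<omega> ^ nat \<bar>b\<bar> = exp (of_nat (nat \<bar>b\<bar>) * (2 * of_real pi * \<i> * of_int t / of_int b))"
      unfolding \<omega>_def by (simp only: exp_of_nat_mult)
    also have "of_nat (nat \<bar>b\<bar>) * (2 * of_real pi * \<i> * of_int t / of_int b) = 2 * of_real pi * \<i> * of_int (sgn b * t)"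
      using b by (auto simp: abs_if sgn_if field_simps)
    also have "exp \<dots> = 1" by (rule exp_int_eq_1)
    finally have "\<omega> ^ nat \<bar>b\<bar> = 1" .
    thus ?thesis using False ne by (simp add: sum_gp_strict)
  qed
  finally show ?thesis .
qed

lemma lsum:
  fixes b r m t :: int and x :: real
  assumes b: "b \<noteq> 0" and mt: "m - 2 * r + 1 = 2 * t"
  shows "(\<Sum>l = 0..\<bar>b\<bar> - 1.
             exp (- 2 * of_real pi * \<i> * (of_int l + of_real x) * of_int r / of_int b
                  + of_real pi * \<i> * (of_int l + of_real x) / of_int b) *
             u n m ((of_int l + x) / of_int b))
       = exp (2 * of_real pi * \<i> * of_real x * of_int t / of_int b) / (of_real pi * \<i> * of_int m) ^ Suc n
         * (if b dvd t then of_int \<bar>b\<bar> else 0)"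
proof -
  have mc: "(of_int m :: complex) = 2 * of_int t + 2 * of_int r - 1"
  proof -
    have "m = 2 * t + 2 * r - 1" using mt by simp
    thus ?thesis by simp
  qed
  have tm: "exp (- 2 * of_real pi * \<i> * (of_int l + of_real x) * of_int r / of_int b
                  + of_real pi * \<i> * (of_int l + of_real x) / of_int b) *
             u n m ((of_int l + x) / of_int b)
       = exp (2 * of_real pi * \<i> * of_real x * of_int t / of_int b) / (of_real pi * \<i> * of_int m) ^ Suc n
         * exp (2 * of_real pi * \<i> * of_int t * of_int l / of_int b)" for l :: int
  proof -
    define A where "A = - 2 * of_real pi * \<i> * (of_int l + of_real x) * of_int r / of_int b
                  + of_real pi * \<i> * (of_int l + of_real x) / of_int b"
    define Bm where "Bm = of_real pi * \<i> * of_int m * of_real ((of_int l + x) / of_int b)"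
    define C where "C = 2 * of_real pi * \<i> * of_real x * of_int t / of_int b"
    define E where "E = 2 * of_real pi * \<i> * of_int t * of_int l / of_int b"
    define D where "D = (of_real pi * \<i> * of_int m) ^ Suc n"
    have e: "A + Bm = C + E"
      using b unfolding A_def Bm_def C_def E_def mc by (simp add: field_simps)
    have "exp A * u n m ((of_int l + x) / of_int b) = exp A * (exp Bm / D)"
      unfolding u_def Bm_def D_def ..
    also have "\<dots> = exp (A + Bm) / D" by (simp add: exp_add)
    also have "\<dots> = exp (C + E) / D" by (simp only: e)
    also have "\<dots> = exp C / D * exp E" by (simp add: exp_add)
    finally show ?thesis unfolding A_def C_def D_def E_def .
  qed
  show ?thesis
    by (simp only: tm sum_distrib_left[symmetric] root_sum[OF b])
qed

definition Oset :: "nat \<Rightarrow> int set" where "Oset K = {m. odd m \<and> \<bar>m\<bar> < 2 * int K}"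

lemma Oset_finite: "finite (Oset K)"
  by (rule finite_subset[of _ "{-2 * int K..2 * int K}"]) (auto simp: Oset_def)

lemma Oset_Suc: "Oset (Suc K) = insert (2 * int K + 1) (insert (- (2 * int K + 1)) (Oset K))"
  unfolding Oset_def by auto presburger+

lemma sum_odd: "(\<Sum>k<K. g (2 * int k + 1) + g (- (2 * int k + 1))) = sum g (Oset K)"
proof (induction K)
  case 0
  have "Oset 0 = {}" by (auto simp: Oset_def)
  thus ?case by simp
next
  case (Suc K)
  have n1: "2 * int K + 1 \<notin> Oset K" "- (2 * int K + 1) \<notin> Oset K" by (auto simp: Oset_def)
  have n2: "2 * int K + 1 \<noteq> - (2 * int K + 1)" by simp
  show ?case using Suc n1 n2 by (simp add: Oset_Suc Oset_finite add_ac)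
qed

definition Dset :: "int \<Rightarrow> int \<Rightarrow> nat \<Rightarrow> int set" where
  "Dset b r K = {d. \<bar>2 * b * d + 2 * r - 1\<bar> < 2 * int K}"

lemma W_eq:
  fixes b r :: int and x :: real
  assumes b: "b \<noteq> 0"
  shows "(\<Sum>l = 0..\<bar>b\<bar> - 1.
             exp (- 2 * of_real pi * \<i> * (of_int l + of_real x) * of_int r / of_int b
                  + of_real pi * \<i> * (of_int l + of_real x) / of_int b) *
             (\<Sum>k<K. u n (2 * int k + 1) ((of_int l + x) / of_int b) + u n (- (2 * int k + 1)) ((of_int l + x) / of_int b)))
       = (\<Sum>d\<in>Dset b r K. of_int \<bar>b\<bar> * exp (2 * of_real pi * \<i> * of_int d * of_real x)
                              / (of_real pi * \<i> * of_int (2 * b * d + 2 * r - 1)) ^ Suc n)"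
proof -
  define e where "e l = exp (- 2 * of_real pi * \<i> * (of_int l + of_real x) * of_int r / of_int b
                  + of_real pi * \<i> * (of_int l + of_real x) / of_int b)" for l :: int
  define L where "L m = (\<Sum>l = 0..\<bar>b\<bar> - 1. e l * u n m ((of_int l + x) / of_int b))" for m
  define phi where "phi d = 2 * b * d + 2 * r - 1" for d :: int
  have Lval: "L m = exp (2 * of_real pi * \<i> * of_real x * of_int t / of_int b) / (of_real pi * \<i> * of_int m) ^ Suc n
         * (if b dvd t then of_int \<bar>b\<bar> else 0)" if "m - 2 * r + 1 = 2 * t" for m t
    unfolding L_def e_def by (rule lsum[OF b that])
  have "(\<Sum>l = 0..\<bar>b\<bar> - 1. e l * (\<Sum>k<K. u n (2 * int k + 1) ((of_int l + x) / of_int b) + u n (- (2 * int k + 1)) ((of_int l + x) / of_int b)))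
      = (\<Sum>k<K. L (2 * int k + 1) + L (- (2 * int k + 1)))"
    unfolding L_def sum_distrib_left distrib_left sum.distrib
    by (simp only: sum.distrib sum.swap[of _ "{..<K}"])
  also have "\<dots> = sum L (Oset K)" by (rule sum_odd)
  also have "\<dots> = sum L (phi ` Dset b r K)"
  proof (rule sum.mono_neutral_right[OF Oset_finite])
    show "phi ` Dset b r K \<subseteq> Oset K"
      by (auto simp: phi_def Dset_def Oset_def)
    show "\<forall>m\<in>Oset K - phi ` Dset b r K. L m = 0"
    proof
      fix m assume m: "m \<in> Oset K - phi ` Dset b r K"
      hence odd: "odd m" by (auto simp: Oset_def)
      define t where "t = (m - 2 * r + 1) div 2"
      have mt: "m - 2 * r + 1 = 2 * t" unfolding t_def using odd by auto presburger
      have "\<not> b dvd t"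
      proof
        assume "b dvd t"
        then obtain d where d: "t = b * d" by blast
        have "m = phi d" unfolding phi_def using mt d by simp
        moreover have "d \<in> Dset b r K" using m \<open>m = phi d\<close> by (auto simp: Oset_def Dset_def phi_def)
        ultimately show False using m by blast
      qed
      thus "L m = 0" using Lval[OF mt] by simp
    qed
  qed
  also have "\<dots> = sum (L \<circ> phi) (Dset b r K)"
  proof (rule sum.reindex)
    show "inj_on phi (Dset b r K)" using b by (auto simp: inj_on_def phi_def)
  qed
  also have "\<dots> = (\<Sum>d\<in>Dset b r K. of_int \<bar>b\<bar> * exp (2 * of_real pi * \<i> * of_int d * of_real x)
                              / (of_real pi * \<i> * of_int (2 * b * d + 2 * r - 1)) ^ Suc n)"
  proof (rule sum.cong[OF refl])
    fix d assume "d \<in> Dset b r K"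
    have "phi d - 2 * r + 1 = 2 * (b * d)" by (simp add: phi_def)
    from Lval[OF this]
    have "L (phi d) = exp (2 * of_real pi * \<i> * of_real x * of_int (b * d) / of_int b) / (of_real pi * \<i> * of_int (phi d)) ^ Suc n
         * of_int \<bar>b\<bar>" by simp
    also have "2 * of_real pi * \<i> * of_real x * of_int (b * d) / of_int b = 2 * of_real pi * \<i> * of_int d * of_real x"
      using b by (simp add: field_simps)
    finally show "(L \<circ> phi) d = of_int \<bar>b\<bar> * exp (2 * of_real pi * \<i> * of_int d * of_real x)
                              / (of_real pi * \<i> * of_int (2 * b * d + 2 * r - 1)) ^ Suc n"
      by (simp add: phi_def)
  qed
  finally show ?thesis unfolding e_def .
qed



lemma const_eq:
  fixes b r d :: int and E :: complex
  assumes b: "b \<noteq> 0"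
  shows "(2 * of_real pi * \<i>) ^ Suc n * of_int (sgn b) /
            (2 * fact n * (of_int b) powi (1 - int (Suc n))) * (2 * fact n) *
         (of_int \<bar>b\<bar> * E / (of_real pi * \<i> * of_int (2 * b * d + 2 * r - 1)) ^ Suc n)
       = E / (of_int d + of_int r / of_int b - 1 / (2 * of_int b)) ^ Suc n"
proof -
  have bc: "(of_int b :: complex) \<noteq> 0" using b by simp
  have p: "(of_int b :: complex) powi (1 - int (Suc n)) = inverse (of_int b) ^ n"
    by (simp add: power_int_def)
  have sb: "(of_int (sgn b) :: complex) * of_int \<bar>b\<bar> = of_int b"
    by (simp only: of_int_mult[symmetric] sgn_mult_abs)
  have den: "of_real pi * \<i> * of_int (2 * b * d + 2 * r - 1)
       = (2 * of_real pi * \<i> * of_int b) * (of_int d + of_int r / of_int b - 1 / (2 * of_int b) :: complex)"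
    using bc by (simp add: field_simps)
  have fn: "(fact n :: complex) \<noteq> 0" by simp
  have "(2 * of_real pi * \<i>) ^ Suc n * of_int (sgn b) /
            (2 * fact n * (of_int b) powi (1 - int (Suc n))) * (2 * fact n) * of_int \<bar>b\<bar>
        = (2 * of_real pi * \<i>) ^ Suc n * (of_int (sgn b) * of_int \<bar>b\<bar>) * of_int b ^ n"
    unfolding p using fn bc by (simp add: field_simps power_inverse)
  also have "\<dots> = (2 * of_real pi * \<i> * of_int b) ^ Suc n"
    unfolding sb by (simp add: power_mult_distrib)
  finally have c: "(2 * of_real pi * \<i>) ^ Suc n * of_int (sgn b) /
            (2 * fact n * (of_int b) powi (1 - int (Suc n))) * (2 * fact n) * of_int \<bar>b\<bar>
        = (2 * of_real pi * \<i> * of_int b) ^ Suc n" .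
  have nz: "(2 * of_real pi * \<i> * of_int b :: complex) \<noteq> 0" using bc by simp
  define C0 where "C0 = (2 * of_real pi * \<i>) ^ Suc n * of_int (sgn b) /
            (2 * fact n * (of_int b) powi (1 - int (Suc n))) * (2 * (fact n :: complex))"
  define X where "X = (of_int d + of_int r / of_int b - 1 / (2 * of_int b) :: complex)"
  define Y where "Y = (2 * of_real pi * \<i> * of_int b :: complex)"
  have c': "C0 * of_int \<bar>b\<bar> = Y ^ Suc n" unfolding C0_def Y_def using c by simp
  have den': "of_real pi * \<i> * of_int (2 * b * d + 2 * r - 1) = Y * X" unfolding X_def Y_def by (rule den)
  have Y0: "Y ^ Suc n \<noteq> 0" unfolding Y_def using nz by simp
  have "C0 * (of_int \<bar>b\<bar> * E / (of_real pi * \<i> * of_int (2 * b * d + 2 * r - 1)) ^ Suc n)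
        = (C0 * of_int \<bar>b\<bar>) * E / (Y ^ Suc n * X ^ Suc n)"
    unfolding den' by (simp add: power_mult_distrib mult_ac)
  also have "\<dots> = E / X ^ Suc n" unfolding c' using Y0 by simp
  finally show ?thesis unfolding C0_def X_def .
qed

lemma absd_le: "(b::int) \<noteq> 0 \<Longrightarrow> \<bar>d\<bar> \<le> \<bar>b * d\<bar>"
  by (simp add: abs_mult mult_right_mono[of 1 "\<bar>b\<bar>" "\<bar>d\<bar>", simplified])

lemma Dset_finite:
  assumes b: "b \<noteq> 0" shows "finite (Dset b r K)"
proof (rule finite_subset[of _ "{-(int K + \<bar>r\<bar>)..int K + \<bar>r\<bar>}"])
  show "Dset b r K \<subseteq> {-(int K + \<bar>r\<bar>)..int K + \<bar>r\<bar>}"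
  proof
    fix d assume "d \<in> Dset b r K"
    hence h: "\<bar>2 * b * d + 2 * r - 1\<bar> < 2 * int K" by (simp add: Dset_def)
    have "\<bar>d\<bar> \<le> \<bar>b * d\<bar>" by (rule absd_le[OF b])
    thus "d \<in> {-(int K + \<bar>r\<bar>)..int K + \<bar>r\<bar>}" using h by auto
  qed
qed simp

lemma D_sup:
  assumes b: "b \<noteq> 0"
  shows "{-int N..int N} \<subseteq> Dset b r (nat \<bar>b\<bar> * N + nat \<bar>r\<bar> + 1)"
proof
  fix d assume "d \<in> {-int N..int N}"
  hence d: "\<bar>d\<bar> \<le> int N" by auto
  have "\<bar>b * d\<bar> \<le> \<bar>b\<bar> * int N" unfolding abs_mult by (rule mult_left_mono[OF d]) simp
  thus "d \<in> Dset b r (nat \<bar>b\<bar> * N + nat \<bar>r\<bar> + 1)"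
    unfolding Dset_def by auto
qed

lemma D_sub:
  assumes b: "b \<noteq> 0"
  shows "Dset b r (nat \<bar>b\<bar> * N + nat \<bar>r\<bar> + 1) \<subseteq> {-int N - (2 * \<bar>r\<bar> + 1)..int N + (2 * \<bar>r\<bar> + 1)}"
proof
  fix d assume "d \<in> Dset b r (nat \<bar>b\<bar> * N + nat \<bar>r\<bar> + 1)"
  hence h: "\<bar>2 * b * d + 2 * r - 1\<bar> < 2 * (\<bar>b\<bar> * int N + \<bar>r\<bar> + 1)"
    by (simp add: Dset_def)
  hence h2: "\<bar>b\<bar> * \<bar>d\<bar> < \<bar>b\<bar> * int N + 2 * \<bar>r\<bar> + 2"
    unfolding abs_mult[symmetric] by auto
  have "\<bar>d\<bar> \<le> int N + (2 * \<bar>r\<bar> + 1)"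
  proof (rule ccontr)
    assume "\<not> ?thesis"
    hence "int N + (2 * \<bar>r\<bar> + 2) \<le> \<bar>d\<bar>" by simp
    hence "\<bar>b\<bar> * (int N + (2 * \<bar>r\<bar> + 2)) \<le> \<bar>b\<bar> * \<bar>d\<bar>" by (rule mult_left_mono) simp
    moreover have "1 * (2 * \<bar>r\<bar> + 2) \<le> \<bar>b\<bar> * (2 * \<bar>r\<bar> + 2)"
      using b by (intro mult_right_mono) auto
    ultimately show False using h2 by (simp add: distrib_left)
  qed
  thus "d \<in> {-int N - (2 * \<bar>r\<bar> + 1)..int N + (2 * \<bar>r\<bar> + 1)}" by auto
qed

lemma h_bound:
  fixes a x :: real and d :: int and N j :: nat
  assumes aN: "\<bar>a\<bar> \<le> real N" and d: "d \<notin> {-int N..int N}" and j: "j \<ge> 1"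
  shows "norm (exp (2 * of_real pi * \<i> * of_int d * of_real x) / (of_real (real_of_int d + a)) ^ j :: complex)
           \<le> 1 / (real N + 1 - \<bar>a\<bar>)"
proof -
  have "\<bar>d\<bar> \<ge> int N + 1" using d by auto
  hence "\<bar>real_of_int d\<bar> \<ge> real N + 1" by linarith
  hence da: "\<bar>real_of_int d + a\<bar> \<ge> real N + 1 - \<bar>a\<bar>" by linarith
  have ge1: "real N + 1 - \<bar>a\<bar> \<ge> 1" using aN by linarith
  have ex: "norm (exp (2 * of_real pi * \<i> * of_int d * of_real x) :: complex) = 1"
  proof -
    have "2 * of_real pi * \<i> * of_int d * of_real x = \<i> * of_real (2 * pi * real_of_int d * x)"
      by simp
    thus ?thesis by simp
  qed
  have "norm (exp (2 * of_real pi * \<i> * of_int d * of_real x) / (of_real (real_of_int d + a)) ^ j :: complex)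
        = 1 / \<bar>real_of_int d + a\<bar> ^ j"
    by (simp only: norm_divide norm_power ex norm_of_real)
  also have "\<dots> \<le> 1 / \<bar>real_of_int d + a\<bar>"
    using da ge1 j by (intro divide_left_mono self_le_power) auto
  also have "\<dots> \<le> 1 / (real N + 1 - \<bar>a\<bar>)"
    using da ge1 by (intro divide_left_mono) auto
  finally show ?thesis .
qed

theorem lemma2p7:
  fixes j :: nat and b r :: int and x :: real
  assumes "j \<ge> 1" and "b \<noteq> 0"
  shows "(\<lambda>N::nat. \<Sum>d = - int N..int N.
            exp (2 * of_real pi * \<i> * of_int d * of_real x) /
            (of_int d + of_int r / of_int b - 1 / (2 * of_int b)) ^ j)
         \<longlonglongrightarrow>
         ((2 * of_real pi * \<i>) ^ j * of_int (sgn b) /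
            (2 * fact (j - 1) * (of_int b) powi (1 - int j)) *
          (\<Sum>l = 0..\<bar>b\<bar> - 1.
             exp (- 2 * of_real pi * \<i> * (of_int l + of_real x) * of_int r / of_int b
                  + of_real pi * \<i> * (of_int l + of_real x) / of_int b) *
             of_real (euler_bar (j - 1) ((of_int l + x) / of_int b))) :: complex)"
proof -
  obtain n where jn: "j = Suc n" using assms(1) by (cases j) auto
  have b: "b \<noteq> 0" by fact
  define e where "e l = exp (- 2 * of_real pi * \<i> * (of_int l + of_real x) * of_int r / of_int b
                  + of_real pi * \<i> * (of_int l + of_real x) / of_int b)" for l :: int
  define y where "y l = (of_int l + x) / of_int b" for l :: int
  define h where "h d = exp (2 * of_real pi * \<i> * of_int d * of_real x) /
            (of_int d + of_int r / of_int b - 1 / (2 * of_int b)) ^ j" for d :: int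
  define Cst :: complex where "Cst = (2 * of_real pi * \<i>) ^ j * of_int (sgn b) /
            (2 * fact (j - 1) * (of_int b) powi (1 - int j))"
  define RS where "RS = (\<Sum>l = 0..\<bar>b\<bar> - 1. e l * of_real (euler_bar (j - 1) (y l)))"
  define W where "W K = Cst * (2 * fact n) * (\<Sum>l = 0..\<bar>b\<bar> - 1. e l *
       (\<Sum>k<K. u n (2 * int k + 1) (y l) + u n (- (2 * int k + 1)) (y l)))" for K
  have limW: "W \<longlonglongrightarrow> Cst * RS"
  proof -
    have l1: "(\<lambda>K. \<Sum>k<K. u n (2 * int k + 1) (y l) + u n (- (2 * int k + 1)) (y l))
               \<longlonglongrightarrow> of_real (euler_bar n (y l)) / (2 * fact n)" for l
    proof -
      have "(\<lambda>K. of_real (\<Sum>k<K. v n k (y l)) :: complex) \<longlonglongrightarrow> of_real (euler_bar n (y l) / (2 * fact n))"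
        by (rule tendsto_of_real[OF ebar_series])
      moreover have "of_real (\<Sum>k<K. v n k (y l)) = (\<Sum>k<K. u n (2 * int k + 1) (y l) + u n (- (2 * int k + 1)) (y l))" for K
        by (simp add: u_pair)
      moreover have "of_real (euler_bar n (y l) / (2 * fact n)) = of_real (euler_bar n (y l)) / (2 * fact n :: complex)"
        by simp
      ultimately show ?thesis by simp
    qed
    have t: "W \<longlonglongrightarrow> Cst * (2 * fact n) * (\<Sum>l = 0..\<bar>b\<bar> - 1. e l * (of_real (euler_bar n (y l)) / (2 * fact n)))"
      unfolding W_def by (intro tendsto_intros l1)
    have eq: "Cst * (2 * fact n) * (\<Sum>l = 0..\<bar>b\<bar> - 1. e l * (of_real (euler_bar n (y l)) / (2 * fact n))) = Cst * RS"
    proof -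
      have "(\<Sum>l = 0..\<bar>b\<bar> - 1. e l * (of_real (euler_bar n (y l)) / (2 * fact n)))
            = (\<Sum>l = 0..\<bar>b\<bar> - 1. e l * of_real (euler_bar n (y l))) / (2 * fact n :: complex)"
        by (simp add: sum_divide_distrib)
      moreover have "(2 * fact n :: complex) \<noteq> 0" by simp
      ultimately show ?thesis unfolding RS_def jn by simp
    qed
    show ?thesis using t unfolding eq .
  qed
  have Weq: "W K = sum h (Dset b r K)" for K
  proof -
    have "W K = Cst * (2 * fact n) * (\<Sum>d\<in>Dset b r K. of_int \<bar>b\<bar> * exp (2 * of_real pi * \<i> * of_int d * of_real x)
                              / (of_real pi * \<i> * of_int (2 * b * d + 2 * r - 1)) ^ Suc n)"
      unfolding W_def e_def y_def by (simp only: W_eq[OF b])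
    also have "\<dots> = (\<Sum>d\<in>Dset b r K. Cst * (2 * fact n) * (of_int \<bar>b\<bar> * exp (2 * of_real pi * \<i> * of_int d * of_real x)
                              / (of_real pi * \<i> * of_int (2 * b * d + 2 * r - 1)) ^ Suc n))"
      by (simp only: sum_distrib_left)
    also have "\<dots> = sum h (Dset b r K)"
      unfolding Cst_def h_def jn by (intro sum.cong refl) (simp only: diff_Suc_1 const_eq[OF b])
    finally show ?thesis .
  qed
  define KN where "KN N = nat \<bar>b\<bar> * N + nat \<bar>r\<bar> + 1" for N
  have smono: "strict_mono KN"
    unfolding strict_mono_Suc_iff KN_def using b by simp
  have lim1: "(\<lambda>N. W (KN N)) \<longlonglongrightarrow> Cst * RS"
    using LIMSEQ_subseq_LIMSEQ[OF limW smono] by (simp add: comp_def)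
  define M where "M = 2 * \<bar>r\<bar> + 1"
  define a where "a = real_of_int r / real_of_int b - 1 / (2 * real_of_int b)"
  have hre: "h d = exp (2 * of_real pi * \<i> * of_int d * of_real x) / (of_real (real_of_int d + a)) ^ j" for d
    unfolding h_def a_def by (simp add: algebra_simps)
  define diff where "diff N = W (KN N) - sum h {-int N..int N}" for N
  have diffeq: "diff N = sum h (Dset b r (KN N) - {-int N..int N})" for N
    unfolding diff_def Weq
    by (rule sum_diff[symmetric]) (use Dset_finite[OF b] D_sup[OF b] in \<open>auto simp: KN_def\<close>)
  have card_le: "card (Dset b r (KN N) - {-int N..int N}) \<le> nat (2 * M)" for N
  proof -
    have "Dset b r (KN N) - {-int N..int N} \<subseteq> {-int N - M..int N + M} - {-int N..int N}"
      using D_sub[OF b, of r N] unfolding KN_def M_def by auto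
    hence "card (Dset b r (KN N) - {-int N..int N}) \<le> card ({-int N - M..int N + M} - {-int N..int N})"
      by (intro card_mono) auto
    also have "\<dots> = card {-int N - M..int N + M} - card {-int N..int N}"
      by (rule card_Diff_subset) (auto simp: M_def)
    also have "\<dots> = nat (2 * M)" by (simp add: M_def)
    finally show ?thesis .
  qed
  define g where "g N = real (nat (2 * M)) / ((1 - \<bar>a\<bar>) + real N)" for N
  have bound: "\<forall>\<^sub>F N in sequentially. norm (diff N) \<le> g N"
    using eventually_ge_at_top[of "nat \<lceil>\<bar>a\<bar>\<rceil>"]
  proof eventually_elim
    case (elim N)
    have aN: "\<bar>a\<bar> \<le> real N" using elim by linarith
    define S where "S = Dset b r (KN N) - {-int N..int N}"
    have "norm (diff N) \<le> (\<Sum>d\<in>S. 1 / (real N + 1 - \<bar>a\<bar>))"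
      unfolding diffeq S_def[symmetric]
    proof (rule sum_norm_le)
      fix d assume "d \<in> S"
      hence "d \<notin> {-int N..int N}" unfolding S_def by blast
      from h_bound[OF aN this assms(1)] show "norm (h d) \<le> 1 / (real N + 1 - \<bar>a\<bar>)"
        unfolding hre .
    qed
    also have "\<dots> = real (card S) * (1 / (real N + 1 - \<bar>a\<bar>))" by simp
    also have "\<dots> \<le> real (nat (2 * M)) * (1 / (real N + 1 - \<bar>a\<bar>))"
      using card_le[of N] aN unfolding S_def by (intro mult_right_mono) auto
    also have "\<dots> = g N" unfolding g_def by (simp add: add_ac)
    finally show ?case .
  qed
  have glim: "g \<longlonglongrightarrow> 0"
    unfolding g_def
    by (intro tendsto_divide_0[OF tendsto_const] filterlim_at_top_imp_at_infinity
          filterlim_tendsto_add_at_top[OF tendsto_const filterlim_real_sequentially])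
  have difflim: "diff \<longlonglongrightarrow> 0" by (rule Lim_null_comparison[OF bound glim])
  have "(\<lambda>N. W (KN N) - diff N) \<longlonglongrightarrow> Cst * RS - 0" by (intro tendsto_diff lim1 difflim)
  hence main: "(\<lambda>N. sum h {-int N..int N}) \<longlonglongrightarrow> Cst * RS" by (simp add: diff_def)
  show ?thesis using main unfolding h_def Cst_def RS_def e_def y_def .
qed


end
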